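(* Let $s\geq 3$ be an integer and let $q\in(0,1)$ be the root of $X^2-sX+1=0$ in $(0,1)$. Put $x_n=\dfrac{q^n-q^{-n}}{q-q^{-1}}$ for $n\in\mathbb{N}$ (these are integers), $x_0!=1$, $x_n!=x_1\cdots x_n$, and $\mathcal{N}(t)=\sum_{n\ge0}t^n/x_n!$. For $z\in\mathbb{C}$ and $t\in\mathbb{R}$ define $$\check z(t)=\frac{z}{\mathcal{N}(|z|^2)}\sum_{n=0}^{\infty}\frac{|z|^{2n}}{x_n!}\exp\big(i(x_{n+2}-x_{n+1})t\big).$$ Then for every $z\in\mathbb{C}$ the curve $t\mapsto\check z(t)$ is periodic with period $2\pi$.
   Context: $\check z(t)$ is the coherent-state expectation of the time-evolved lowering operator, i.e. the semi-classical phase-space trajectory for the $q$-deformed harmonic oscillator whose spectrum is $(x_{n+1})$. *)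

theory Defs
  imports "HOL-Analysis.Analysis"
begin

definition qnum :: "real \<Rightarrow> nat \<Rightarrow> real" where
  "qnum q n = (q ^ n - inverse q ^ n) / (q - inverse q)"

definition qfact :: "real \<Rightarrow> nat \<Rightarrow> real" where
  "qfact q n = (\<Prod>k\<in>{1..n}. qnum q k)"

definition qN :: "real \<Rightarrow> real \<Rightarrow> real" where
  "qN q t = (\<Sum>n. t ^ n / qfact q n)"

definition zcheck :: "real \<Rightarrow> complex \<Rightarrow> real \<Rightarrow> complex" where
  "zcheck q z t = z / complex_of_real (qN q ((cmod z)\<^sup>2)) *
     (\<Sum>n. complex_of_real ((cmod z) ^ (2 * n) / qfact q n) *
          exp (\<i> * complex_of_real ((qnum q (n + 2) - qnum q (n + 1)) * t)))"

end

theory Submission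
  imports Defs
begin

lemma qnum_rec:
  assumes "q \<noteq> 0" "q + inverse q = c"
  shows "qnum q (n+2) = c * qnum q (n+1) - qnum q n"
proof -
  have ab: "q * inverse q = 1" using assms(1) by simp
  have "q^(n+2) - inverse q^(n+2) = (q + inverse q) * (q^(n+1) - inverse q^(n+1))
        - (q * inverse q) * (q^n - inverse q^n)"
    by (simp add: algebra_simps power_Suc)
  then have "q^(n+2) - inverse q^(n+2) = c * (q^(n+1) - inverse q^(n+1)) - (q^n - inverse q^n)"
    using ab assms(2) by simp
  then show ?thesis unfolding qnum_def by (simp add: diff_divide_distrib[symmetric])
qed

lemma qnum_int:
  assumes "q \<noteq> 0" "q + inverse q = of_int s" "q \<noteq> inverse q"
  shows "qnum q n \<in> \<int> \<and> qnum q (n+1) \<in> \<int>"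
proof (induction n)
  case 0
  then show ?case using assms(3) by (simp add: qnum_def)
next
  case (Suc n)
  have "qnum q (n+2) = of_int s * qnum q (n+1) - qnum q n"
    using qnum_rec[OF assms(1,2)] .
  then have "qnum q (n+2) \<in> \<int>" using Suc by (simp add: Ints_diff Ints_mult)
  then show ?case using Suc by simp
qed

theorem mainTheorem5:
  fixes s :: int and q :: real and z :: complex
  assumes "s \<ge> 3"
    and "0 < q" and "q < 1"
    and "q\<^sup>2 - of_int s * q + 1 = 0"
  shows "\<forall>t::real. zcheck q z (t + 2 * pi) = zcheck q z t"
proof
  fix t :: real
  have q0: "q \<noteq> 0" using assms by simp
  have sq: "q + inverse q = of_int s"
  proof -
    have "q * (q + inverse q) = q * of_int s" using assms(4) q0
      by (simp add: algebra_simps power2_eq_square)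
    then show ?thesis using q0 by simp
  qed
  have ne: "q \<noteq> inverse q"
  proof
    assume "q = inverse q"
    then have "q * q = 1" using q0 by (metis right_inverse)
    then show False using assms(2,3) by (metis less_irrefl mult_strict_mono' mult_1_left le_less order_less_trans  mult_less_cancel_right1)
  qed
  have key: "\<And>n. exp (\<i> * complex_of_real ((qnum q (n + 2) - qnum q (n + 1)) * (t + 2*pi)))
     = exp (\<i> * complex_of_real ((qnum q (n + 2) - qnum q (n + 1)) * t))"
  proof -
    fix n
    have "qnum q (n + 2) - qnum q (n + 1) \<in> \<int>"
      using qnum_int[OF q0 sq ne, of "n+1"] by (simp add: Ints_diff)
    then obtain k where k: "qnum q (n + 2) - qnum q (n + 1) = of_int k" by (metis Ints_cases)
    have "\<i> * complex_of_real (of_int k * (t + 2*pi)) =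
          \<i> * complex_of_real (of_int k * t) + \<i> * (of_int k * (of_real pi * 2))"
      by (simp add: algebra_simps)
    then show "exp (\<i> * complex_of_real ((qnum q (n + 2) - qnum q (n + 1)) * (t + 2*pi)))
     = exp (\<i> * complex_of_real ((qnum q (n + 2) - qnum q (n + 1)) * t))"
      unfolding k by (simp only: exp_plus_2pin)
  qed
  show "zcheck q z (t + 2 * pi) = zcheck q z t"
    unfolding zcheck_def using key by simp
qed

end
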